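(* Let $r,s\in\widetilde{\mathbb{K}}_{sm}$ with $r\neq0$, $s\neq0$ and $rs=0$. Then there exists a characteristic set $S\subseteq I$ such that $r|_S=0$ and $s|_S=0$.
   Context: Let $I=(0,1]$ and $\mathbb{K}\in\{\mathbb{R},\mathbb{C}\}$. $\widetilde{\mathbb{K}}_{sm}=\mathcal{E}_{M,sm}/\mathcal{N}_{sm}$ where $\mathcal{E}_{M,sm}$ is the set of nets $(r_\varepsilon)_{\varepsilon\in I}\in\mathbb{K}^I$ smooth in $\varepsilon$ with $|r_\varepsilon|=O(\varepsilon^{-N})$ as $\varepsilon\to0$ for some $N$, and $\mathcal{N}_{sm}$ those with $|r_\varepsilon|=O(\varepsilon^m)$ for all $m$. A subset $S\subseteq I$ is a characteristic set if $0\in\overline{S}$. For $r\in\widetilde{\mathbb{K}}_{sm}$ and a characteristic set $S$, $r|_S=0$ means: for a (equivalently, any) representative $(r_\varepsilon)_\varepsilon$ and every $m\in\mathbb{N}$ there is $\varepsilon_0>0$ with $|r_\varepsilon|<\varepsilon^m$ for all $\varepsilon\in S$ with $\varepsilon<\varepsilon_0$. *)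

theory Defs
  imports "HOL-Analysis.Analysis"
begin

text \<open>Nets are represented by functions on real numbers; only their values on
  I = (0,1] matter.  The parameter set I.\<close>

abbreviation I_set :: "real set" where "I_set \<equiv> {0<..1}"

definition smooth_net :: "(real \<Rightarrow> 'a::real_normed_vector) \<Rightarrow> bool" where
  "smooth_net r \<longleftrightarrow>
     (\<exists>f :: nat \<Rightarrow> real \<Rightarrow> 'a. (\<forall>x\<in>I_set. f 0 x = r x) \<and>
        (\<forall>k. \<forall>x\<in>I_set. (f k has_vector_derivative f (Suc k) x) (at x within I_set)))"

definition moderate_net :: "(real \<Rightarrow> 'a::real_normed_vector) \<Rightarrow> bool" where
  "moderate_net r \<longleftrightarrow>
     (\<exists>N::nat. \<exists>C. \<exists>e0>0. \<forall>e. 0 < e \<and> e < e0 \<longrightarrow> norm (r e) \<le> C * (1 / e) ^ N)"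

definition negligible_net :: "(real \<Rightarrow> 'a::real_normed_vector) \<Rightarrow> bool" where
  "negligible_net r \<longleftrightarrow>
     (\<forall>m::nat. \<exists>C. \<exists>e0>0. \<forall>e. 0 < e \<and> e < e0 \<longrightarrow> norm (r e) \<le> C * e ^ m)"

definition EMsm :: "(real \<Rightarrow> 'a::real_normed_vector) set" where
  "EMsm = {r. smooth_net r \<and> moderate_net r}"

definition characteristic_set :: "real set \<Rightarrow> bool" where
  "characteristic_set S \<longleftrightarrow> S \<subseteq> I_set \<and> 0 \<in> closure S"

text \<open>r|_S = 0, stated for a representative.\<close>
definition vanishes_on :: "(real \<Rightarrow> 'a::real_normed_vector) \<Rightarrow> real set \<Rightarrow> bool" where
  "vanishes_on r S \<longleftrightarrow>
     (\<forall>m::nat. \<exists>e0>0. \<forall>e\<in>S. e < e0 \<longrightarrow> norm (r e) < e ^ m)"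

end

theory Submission
  imports Defs
begin

lemma small_aux:
  fixes r s :: "real \<Rightarrow> 'a::real_normed_div_algebra"
  assumes "negligible_net (\<lambda>e. r e * s e)"
  shows "\<exists>e0>0. \<forall>e. 0<e \<and> e<e0 \<and> norm (r e) \<le> norm (s e) \<longrightarrow> norm (r e) < e^m"
proof -
  obtain C e0 where e0: "e0 > 0" and C: "\<And>e. 0 < e \<and> e < e0 \<Longrightarrow> norm (r e * s e) \<le> C * e ^ (2*m+1)"
    using assms unfolding negligible_net_def by blast
  define D where "D = max C 1"
  have D: "D > 0" "C \<le> D" unfolding D_def by auto
  define e1 where "e1 = min e0 (1/D)"
  have "e1 > 0" using e0 D unfolding e1_def by auto
  moreover have "norm (r e) < e^m" if h: "0<e" "e<e1" "norm (r e) \<le> norm (s e)" for e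
  proof -
    have "e < e0" "e < 1/D" using h unfolding e1_def by auto
    hence De: "D * e < 1" using D by (simp add: field_simps)
    have "norm (r e) ^ 2 \<le> norm (r e) * norm (s e)"
      using h(3) by (simp add: power2_eq_square mult_left_mono)
    also have "\<dots> = norm (r e * s e)" by (simp add: norm_mult)
    also have "\<dots> \<le> C * e ^ (2*m+1)" using C h \<open>e<e0\<close> by auto
    also have "\<dots> \<le> D * e ^ (2*m+1)" using D h by (intro mult_right_mono) auto
    also have "\<dots> = (D*e) * (e^m)^2" by (simp add: power_add power_mult[symmetric] mult.commute mult.left_commute)
    also have "\<dots> < (e^m)^2" using De h(1) by simp
    finally have "norm (r e) ^ 2 < (e^m)^2" .
    thus ?thesis using h(1) by (meson power_less_imp_less_base zero_le_power less_imp_le)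
  qed
  ultimately show ?thesis by blast
qed

lemma smooth_cont:
  fixes r :: "real \<Rightarrow> 'a::real_normed_vector"
  assumes "smooth_net r"
  shows "continuous_on I_set r"
proof -
  obtain f where f0: "\<forall>x\<in>I_set. f 0 x = r x"
    and fd: "\<forall>k. \<forall>x\<in>I_set. (f k has_vector_derivative f (Suc k) x) (at x within I_set)"
    using assms unfolding smooth_net_def by blast
  have "continuous_on I_set (f 0)"
    unfolding continuous_on_eq_continuous_within
    using fd has_vector_derivative_continuous by blast
  thus ?thesis using continuous_on_eq f0 by blast
qed

lemma negl_aux:
  fixes r s :: "real \<Rightarrow> 'a::real_normed_div_algebra"
  assumes d: "d > 0" "\<And>e. 0<e \<Longrightarrow> e<d \<Longrightarrow> norm (r e) \<le> norm (s e)"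
    and hrs: "negligible_net (\<lambda>e. r e * s e)"
  shows "negligible_net r"
    unfolding negligible_net_def
  proof
    fix m
    obtain e0 where e0: "e0>0" "\<forall>e. 0<e \<and> e<e0 \<and> norm (r e) \<le> norm (s e) \<longrightarrow> norm (r e) < e^m"
      using small_aux[OF hrs, of m] by blast
    show "\<exists>C. \<exists>e0>0. \<forall>e. 0 < e \<and> e < e0 \<longrightarrow> norm (r e) \<le> C * e ^ m"
      apply (rule exI[of _ 1], rule exI[of _ "min e0 d"])
      using e0 d by (auto intro: less_imp_le)
qed

lemma main_gen:
  fixes r s :: "real \<Rightarrow> 'a::real_normed_div_algebra"
  assumes "r \<in> EMsm" "s \<in> EMsm" "\<not> negligible_net r" "\<not> negligible_net s"
    "negligible_net (\<lambda>e. r e * s e)"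
  shows "\<exists>S. characteristic_set S \<and> vanishes_on r S \<and> vanishes_on s S"
proof -
  have ns: "negligible_net (\<lambda>e. s e * r e)"
    using assms(5) unfolding negligible_net_def by (simp add: norm_mult mult.commute)
  define g where "g e = norm (r e) - norm (s e)" for e
  have cg: "continuous_on I_set g"
    using smooth_cont[of r] smooth_cont[of s] assms(1,2) unfolding EMsm_def g_def
    by (auto intro!: continuous_intros)
  define S where "S = {e\<in>I_set. g e = 0}"
  have cl: "0 \<in> closure S"
  proof (rule ccontr)
    assume "0 \<notin> closure S"
    then obtain d0 where d0: "d0 > 0" "\<forall>y\<in>S. \<not> dist y 0 < d0"
      unfolding closure_approachable by blast
    define d where "d = min d0 1"
    have d: "d > 0" "d \<le> 1" "\<And>y. y \<in> S \<Longrightarrow> \<not> y < d"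
      using d0 unfolding d_def S_def by (auto simp: dist_real_def)
    have nz: "g x \<noteq> 0" if "0 < x" "x < d" for x
      using d(2) d(3)[of x] that unfolding S_def by auto
    have "(\<forall>e. 0<e \<longrightarrow> e<d \<longrightarrow> g e \<le> 0) \<or> (\<forall>e. 0<e \<longrightarrow> e<d \<longrightarrow> g e \<ge> 0)"
    proof (rule ccontr)
      assume "\<not> ?thesis"
      then obtain a b where ab: "0<a" "a<d" "g a > 0" "0<b" "b<d" "g b < 0"
        by (auto simp: not_le)
      have cab: "continuous_on {min a b..max a b} g"
        using ab d(2) by (intro continuous_on_subset[OF cg]) auto
      have "\<exists>x. min a b \<le> x \<and> x \<le> max a b \<and> g x = 0"
      proof (cases "a \<le> b")
        case True thus ?thesis using IVT2'[of g b 0 a] cab ab by auto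
      next
        case False thus ?thesis using IVT'[of g b 0 a] cab ab by auto
      qed
      then obtain x where "min a b \<le> x" "x \<le> max a b" "g x = 0" by blast
      moreover have "0 < x" "x < d" using calculation ab by auto
      ultimately show False using nz by blast
    qed
    thus False
    proof
      assume "\<forall>e. 0<e \<longrightarrow> e<d \<longrightarrow> g e \<le> 0"
      hence "negligible_net r" using negl_aux[OF d(1) _ assms(5)] unfolding g_def by auto
      thus False using assms(3) by blast
    next
      assume "\<forall>e. 0<e \<longrightarrow> e<d \<longrightarrow> g e \<ge> 0"
      hence "negligible_net s" using negl_aux[OF d(1) _ ns] unfolding g_def by auto
      thus False using assms(4) by blast
    qed
  qed
  have vr: "vanishes_on r S" unfolding vanishes_on_def
  proof
    fix m
    obtain e0 where e0: "e0>0" "\<forall>e. 0<e \<and> e<e0 \<and> norm (r e) \<le> norm (s e) \<longrightarrow> norm (r e) < e^m"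
      using small_aux[OF assms(5), of m] by blast
    show "\<exists>e0>0. \<forall>e\<in>S. e < e0 \<longrightarrow> norm (r e) < e ^ m"
      using e0 unfolding S_def g_def by (intro exI[of _ e0]) auto
  qed
  have vs: "vanishes_on s S" unfolding vanishes_on_def
  proof
    fix m
    obtain e0 where e0: "e0>0" "\<forall>e. 0<e \<and> e<e0 \<and> norm (s e) \<le> norm (r e) \<longrightarrow> norm (s e) < e^m"
      using small_aux[OF ns, of m] by blast
    show "\<exists>e0>0. \<forall>e\<in>S. e < e0 \<longrightarrow> norm (s e) < e ^ m"
      using e0 unfolding S_def g_def by (intro exI[of _ e0]) auto
  qed
  have "characteristic_set S" unfolding characteristic_set_def using cl S_def by auto
  thus ?thesis using vr vs by blast
qed

theorem lemma4p17:
  shows "(\<forall>r s :: real \<Rightarrow> real. r \<in> EMsm \<longrightarrow> s \<in> EMsm \<longrightarrow>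
            \<not> negligible_net r \<longrightarrow> \<not> negligible_net s \<longrightarrow>
            negligible_net (\<lambda>e. r e * s e) \<longrightarrow>
            (\<exists>S. characteristic_set S \<and> vanishes_on r S \<and> vanishes_on s S))
       \<and> (\<forall>r s :: real \<Rightarrow> complex. r \<in> EMsm \<longrightarrow> s \<in> EMsm \<longrightarrow>
            \<not> negligible_net r \<longrightarrow> \<not> negligible_net s \<longrightarrow>
            negligible_net (\<lambda>e. r e * s e) \<longrightarrow>
            (\<exists>S. characteristic_set S \<and> vanishes_on r S \<and> vanishes_on s S))"
  using main_gen[where 'a=real] main_gen[where 'a=complex] by blast

end
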